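(* Let $K$ be a compact set in a metric space, let $\delta>0$ and $C>1$. Then there exists a $(\delta,C)$-discretization of $K$.
   Context: For a compact metric space $K$, $\delta>0$ and $C>1$, a $(\delta,C)$-discretization of $K$ is a finite set of points $\{x_1,\dots,x_n\}\subset K$ such that for all $x,y\in K$, $|\{i: x_i\in B(x,\delta/2)\}|< C\,|\{i: x_i\in B(y,\delta)\}|$, where $B(p,r)$ denotes the open ball of radius $r$ centered at $p$. *)

theory Defs
  imports "HOL-Analysis.Analysis"
begin

definition discretization :: "'a::metric_space set \<Rightarrow> real \<Rightarrow> real \<Rightarrow> 'a list \<Rightarrow> bool" where
  "discretization K \<delta> C xs \<longleftrightarrow>
     set xs \<subseteq> K \<and>
     (\<forall>x\<in>K. \<forall>y\<in>K.
        real (card {i. i < length xs \<and> xs ! i \<in> ball x (\<delta>/2)})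
          < C * real (card {i. i < length xs \<and> xs ! i \<in> ball y \<delta>}))"

end

theory Submission
  imports Defs
begin

theorem lemma1:
  fixes K :: "'a::metric_space set" and \<delta> C :: real
  assumes "compact K" and "\<delta> > 0" and "C > 1"
  shows "\<exists>xs. discretization K \<delta> C xs"
proof -
  obtain F where F: "F \<subseteq> K" "finite F" "K \<subseteq> (\<Union>c\<in>F. ball c (\<delta>/2))"
  proof (rule compactE_image[OF assms(1), of K "\<lambda>c. ball c (\<delta>/2)"])
    show "K \<subseteq> (\<Union>c\<in>K. ball c (\<delta>/2))"
    proof
      fix x assume "x \<in> K"
      moreover have "x \<in> ball x (\<delta>/2)" using assms(2) by simp
      ultimately show "x \<in> (\<Union>c\<in>K. ball c (\<delta>/2))" by blast
    qed
  next
    fix T assume "T \<in> K" then show "open (ball T (\<delta>/2))" by simp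
  next
    fix C' assume "C' \<subseteq> K" "finite C'" "K \<subseteq> (\<Union>c\<in>C'. ball c (\<delta>/2))"
    then show thesis using that by blast
  qed
  define P where "P S \<longleftrightarrow> S \<subseteq> K \<and> finite S \<and> (\<forall>a\<in>S. \<forall>b\<in>S. a \<noteq> b \<longrightarrow> dist a b \<ge> \<delta>)" for S
  have bound: "card S < Suc (card F)" if "P S" for S
  proof -
    have SK: "S \<subseteq> K" using that unfolding P_def by simp
    have "\<forall>s\<in>S. \<exists>c. c \<in> F \<and> s \<in> ball c (\<delta>/2)"
    proof
      fix s assume "s \<in> S"
      then have "s \<in> (\<Union>c\<in>F. ball c (\<delta>/2))" using SK F(3) by blast
      then show "\<exists>c. c \<in> F \<and> s \<in> ball c (\<delta>/2)" by blast
    qed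
    then obtain g where g0: "\<forall>s\<in>S. g s \<in> F \<and> s \<in> ball (g s) (\<delta>/2)"
      using bchoice[of S "\<lambda>s c. c \<in> F \<and> s \<in> ball c (\<delta>/2)"] by blast
    have g: "g s \<in> F \<and> s \<in> ball (g s) (\<delta>/2)" if "s \<in> S" for s using g0 that by blast
    have "inj_on g S"
    proof (rule inj_onI, rule ccontr)
      fix a b assume ab: "a \<in> S" "b \<in> S" "g a = g b" "a \<noteq> b"
      have "dist a b \<le> dist a (g a) + dist b (g b)"
        using ab(3) dist_triangle2[of a b "g a"] by (simp add: dist_commute)
      also have "\<dots> < \<delta>" using g[OF ab(1)] g[OF ab(2)] by (simp add: dist_commute)
      moreover have "\<delta> \<le> dist a b" using that ab(1,2,4) unfolding P_def by blast
      ultimately show False by linarith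
    qed
    then have "card S \<le> card F" using card_inj_on_le[of g S F] g F(2) by blast
    then show ?thesis by simp
  qed
  have "P {}" unfolding P_def by simp
  have "\<forall>T. P T \<longrightarrow> card T < Suc (card F)" using bound by blast
  from ex_has_greatest_nat[of P "{}" card "Suc (card F)", OF \<open>P {}\<close> this]
  obtain S where S: "P S" and Smax0: "\<forall>T. P T \<longrightarrow> card T \<le> card S" by blast
  have Smax: "card T \<le> card S" if "P T" for T using Smax0 that by blast
  have cover: "\<exists>s\<in>S. dist y s < \<delta>" if "y \<in> K" for y
  proof (rule ccontr)
    assume nc: "\<not> ?thesis"
    have nin: "y \<notin> S"
    proof
      assume "y \<in> S"
      moreover have "dist y y < \<delta>" using assms(2) by simp
      ultimately have "\<exists>s\<in>S. dist y s < \<delta>" by blast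
      with nc show False by blast
    qed
    have far1: "\<delta> \<le> dist y s" if "s \<in> S" for s
    proof -
      have "\<not> dist y s < \<delta>" using nc that by blast
      then show ?thesis by simp
    qed
    have far2: "\<delta> \<le> dist s y" if "s \<in> S" for s
      using far1[OF that] dist_commute[of s y] by simp
    have S1: "S \<subseteq> K" "finite S" and S2: "\<forall>a\<in>S. \<forall>b\<in>S. a \<noteq> b \<longrightarrow> dist a b \<ge> \<delta>"
      using S unfolding P_def by auto
    have "\<forall>a\<in>insert y S. \<forall>b\<in>insert y S. a \<noteq> b \<longrightarrow> dist a b \<ge> \<delta>"
    proof (intro ballI impI)
      fix a b assume a: "a \<in> insert y S" and b: "b \<in> insert y S" and ab: "a \<noteq> b"
      show "dist a b \<ge> \<delta>"
      proof (cases "a = y")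
        case True
        then have "b \<in> S" using b ab by simp
        then show ?thesis using far1 True by simp
      next
        case False
        then have aS: "a \<in> S" using a by simp
        show ?thesis
        proof (cases "b = y")
          case True
          then show ?thesis using far2[OF aS] by simp
        next
          case False
          then have "b \<in> S" using b by simp
          then show ?thesis using S2 aS ab by blast
        qed
      qed
    qed
    moreover have "insert y S \<subseteq> K" using S1(1) that by blast
    moreover have "finite (insert y S)" using S1(2) by blast
    ultimately have "P (insert y S)" unfolding P_def by blast
    then have "card (insert y S) \<le> card S" by (rule Smax)
    moreover have "card (insert y S) = Suc (card S)" using S1(2) nin by (rule card_insert_disjoint)
    ultimately show False by linarith
  qed
  have finS: "finite S" and SK: "S \<subseteq> K" using S unfolding P_def by auto
  obtain xs where xs: "distinct xs" "set xs = S"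
    using finite_distinct_list[OF finS] by blast
  have "discretization K \<delta> C xs"
    unfolding discretization_def
  proof (intro conjI ballI)
    show "set xs \<subseteq> K" using xs(2) SK by simp
  next
    fix x y assume x: "x \<in> K" and y: "y \<in> K"
    have fin: "finite {i. i < length xs \<and> xs ! i \<in> ball x (\<delta>/2)}" by simp
    have le1: "card {i. i < length xs \<and> xs ! i \<in> ball x (\<delta>/2)} \<le> Suc 0"
    proof (subst card_le_Suc0_iff_eq[OF fin])
      show "\<forall>i\<in>{i. i < length xs \<and> xs ! i \<in> ball x (\<delta>/2)}. \<forall>j\<in>{i. i < length xs \<and> xs ! i \<in> ball x (\<delta>/2)}. i = j"
      proof (intro ballI)
        fix i j assume i: "i \<in> {i. i < length xs \<and> xs ! i \<in> ball x (\<delta>/2)}"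
          and j: "j \<in> {i. i < length xs \<and> xs ! i \<in> ball x (\<delta>/2)}"
        have "dist (xs ! i) (xs ! j) \<le> dist (xs ! i) x + dist (xs ! j) x"
          using dist_triangle2[of "xs!i" "xs!j" x] by simp
        also have "\<dots> < \<delta>" using i j by (simp add: dist_commute)
        finally have lt: "dist (xs ! i) (xs ! j) < \<delta>" .
        have "xs ! i \<in> S" "xs ! j \<in> S" using i j xs(2) by auto
        then have "xs ! i = xs ! j" using S lt unfolding P_def by (meson not_le)
        then show "i = j" using xs(1) i j nth_eq_iff_index_eq by blast
      qed
    qed
    obtain s where s: "s \<in> S" "dist y s < \<delta>" using cover[OF y] by blast
    then obtain i where i: "i < length xs" "xs ! i = s" using xs by (metis in_set_conv_nth)
    have iin: "i \<in> {i. i < length xs \<and> xs ! i \<in> ball y \<delta>}" using i s by simp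
    have finy: "finite {i. i < length xs \<and> xs ! i \<in> ball y \<delta>}" by simp
    have "0 < card {i. i < length xs \<and> xs ! i \<in> ball y \<delta>}"
      using iin finy card_gt_0_iff by blast
    then have ge1: "card {i. i < length xs \<and> xs ! i \<in> ball y \<delta>} \<ge> 1" by simp
    have "real (card {i. i < length xs \<and> xs ! i \<in> ball x (\<delta>/2)}) \<le> 1" using le1 by simp
    also have "1 < C * 1" using assms(3) by simp
    also have "C * 1 \<le> C * real (card {i. i < length xs \<and> xs ! i \<in> ball y \<delta>})"
      using ge1 assms(3) by simp
    finally show "real (card {i. i < length xs \<and> xs ! i \<in> ball x (\<delta>/2)})
          < C * real (card {i. i < length xs \<and> xs ! i \<in> ball y \<delta>})" .
  qed
  then show ?thesis by blast
qed

end
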